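(* Consider a nonrelativistic quantum system with $n$ degrees of freedom and Hamiltonian $$H(\hat q,\hat p)=\tfrac12\hat p\cdot\mathbf M\hat p+\tfrac12\hat q\cdot\mathbf C\hat p+\tfrac12\hat p\cdot\mathbf C^\top\hat q+\hat p\cdot\xi_p+U(\hat q),$$ where $\mathbf M$ is a real, symmetric, positive definite $n\times n$ matrix, $\mathbf C$ is a real $n\times n$ matrix, $\xi_p\in\mathbb R^n$ and $U$ is a real function. Suppose the system is in a pure state with wave function $\psi(q,t)=\Omega(q,t)e^{iS(q,t)/\hbar}$, $\Omega=|\psi|$. For $T_0\in L^2(\Omega^2)$ let $$\mathcal L_Q(T_0,t):=\frac{\hbar^2}{8}\,\frac{\langle\partial_qT_0\rangle\cdot\mathbf M\,\langle\partial_qT_0\rangle}{\mathrm{Cov}(T_0,T_0)},$$ and let $\langle Q(t)\rangle:=-\frac{\hbar^2}{2}\int_{\mathbb R^n}d^nq\,\Omega\,\partial_q\cdot\mathbf M\partial_q\Omega$ be the mean value of the quantum potential. Then there is a specific function $T_\ast\in L^2(\Omega^2)$ extremizing $\mathcal L_Q(\cdot,t)$, and the resulting bound depends only on $\Omega^2$: $$\langle Q(t)\rangle\ \ge\ \frac{\hbar^2}{8}\,\lambda_\wedge(\mathbf Q),\qquad \mathbf Q:=-\big\langle\partial^2_{qq}\ln\Omega^2\big\rangle\,\mathbf M,$$ where $\lambda_\wedge(\mathbf Q)$ denotes the largest eigenvalue of the real $n\times n$ matrix $\mathbf Q$.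
   Context: $\partial_q=(\partial/\partial q_1,\dots,\partial/\partial q_n)^\top$ and $\partial^2_{qq}$ denotes the Hessian matrix with respect to $q$. The amplitude $\Omega:\mathbb R^n\times\mathbb R\to\mathbb R_+$ is assumed continuous and twice continuously differentiable, with $\int_{\mathbb R^n}\Omega(q,t)^2d^nq=1$ for all $t$ and $\Omega(q,t)\to0$ as $\|q\|\to\infty$. $L^2(\Omega^2)$ denotes the set of functions on $\mathbb R^n$ square-integrable with respect to $\Omega^2d^nq$, all assumed continuous with continuous first and second derivatives. Means and covariances are with respect to $\Omega^2$: $\langle T\rangle:=\int d^nq\,\Omega^2T$ (componentwise for vector or matrix valued $T$), $\mathrm{Cov}(T_i,T_j):=\langle T_iT_j\rangle-\langle T_i\rangle\langle T_j\rangle$. *)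

theory Defs
  imports "HOL-Analysis.Analysis"
begin

definition pderiv_i :: "'n::finite \<Rightarrow> (real^'n \<Rightarrow> real) \<Rightarrow> real^'n \<Rightarrow> real" where
  "pderiv_i i f x = frechet_derivative f (at x) (axis i 1)"

definition grad :: "(real^'n::finite \<Rightarrow> real) \<Rightarrow> real^'n \<Rightarrow> real^'n" where
  "grad f x = (\<chi> i. pderiv_i i f x)"

definition hess :: "(real^'n::finite \<Rightarrow> real) \<Rightarrow> real^'n \<Rightarrow> real^'n^'n" where
  "hess f x = (\<chi> i j. pderiv_i i (\<lambda>y. pderiv_i j f y) x)"

definition C1_fun :: "(real^'n::finite \<Rightarrow> real) \<Rightarrow> bool" where
  "C1_fun f \<longleftrightarrow> (\<forall>x. f differentiable (at x)) \<and> continuous_on UNIV (grad f)"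

definition C2_fun :: "(real^'n::finite \<Rightarrow> real) \<Rightarrow> bool" where
  "C2_fun f \<longleftrightarrow> C1_fun f \<and> (\<forall>x. grad f differentiable (at x)) \<and> continuous_on UNIV (hess f)"

definition wmean :: "(real^'n::finite \<Rightarrow> real) \<Rightarrow> (real^'n \<Rightarrow> real) \<Rightarrow> real" where
  "wmean \<Omega> T = integral\<^sup>L lborel (\<lambda>q. (\<Omega> q)\<^sup>2 * T q)"

definition wmean_vec :: "(real^'n::finite \<Rightarrow> real) \<Rightarrow> (real^'n \<Rightarrow> real^'n) \<Rightarrow> real^'n" where
  "wmean_vec \<Omega> V = (\<chi> i. wmean \<Omega> (\<lambda>q. V q $ i))"

definition wmean_mat :: "(real^'n::finite \<Rightarrow> real) \<Rightarrow> (real^'n \<Rightarrow> real^'n^'n) \<Rightarrow> real^'n^'n" where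
  "wmean_mat \<Omega> A = (\<chi> i j. wmean \<Omega> (\<lambda>q. A q $ i $ j))"

definition wcov :: "(real^'n::finite \<Rightarrow> real) \<Rightarrow> (real^'n \<Rightarrow> real) \<Rightarrow> (real^'n \<Rightarrow> real) \<Rightarrow> real" where
  "wcov \<Omega> T1 T2 = wmean \<Omega> (\<lambda>q. T1 q * T2 q) - wmean \<Omega> T1 * wmean \<Omega> T2"

text \<open>Admissible test functions: elements of L^2(Omega^2) (continuously differentiable),
  whose gradient has a finite Omega^2-mean, so that L_Q is defined.\<close>
definition admissible :: "(real^'n::finite \<Rightarrow> real) \<Rightarrow> (real^'n \<Rightarrow> real) \<Rightarrow> bool" where
  "admissible \<Omega> T \<longleftrightarrow> C1_fun T
     \<and> integrable lborel (\<lambda>q. (\<Omega> q)\<^sup>2 * (T q)\<^sup>2)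
     \<and> (\<forall>i. integrable lborel (\<lambda>q. (\<Omega> q)\<^sup>2 * grad T q $ i))"

definition LQ :: "real \<Rightarrow> real^'n^'n \<Rightarrow> (real^'n::finite \<Rightarrow> real) \<Rightarrow> (real^'n \<Rightarrow> real) \<Rightarrow> real" where
  "LQ hbar M \<Omega> T = hbar\<^sup>2 / 8 *
     ((wmean_vec \<Omega> (grad T) \<bullet> (M *v wmean_vec \<Omega> (grad T))) / wcov \<Omega> T T)"

definition mean_quantum_potential :: "real \<Rightarrow> real^'n^'n \<Rightarrow> (real^'n::finite \<Rightarrow> real) \<Rightarrow> real" where
  "mean_quantum_potential hbar M \<Omega> = - (hbar\<^sup>2 / 2) *
     integral\<^sup>L lborel (\<lambda>q. \<Omega> q * (\<Sum>i\<in>UNIV. \<Sum>j\<in>UNIV. M $ i $ j * hess \<Omega> q $ i $ j))"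

definition Qmat :: "real^'n^'n \<Rightarrow> (real^'n::finite \<Rightarrow> real) \<Rightarrow> real^'n^'n" where
  "Qmat M \<Omega> = (- wmean_mat \<Omega> (hess (\<lambda>q. ln ((\<Omega> q)\<^sup>2)))) ** M"

definition largest_eigenvalue :: "real^'n^'n::finite \<Rightarrow> real" where
  "largest_eigenvalue A = Max {l. \<exists>v. v \<noteq> 0 \<and> A *v v = l *\<^sub>R v}"

end

theory Submission
  imports Defs
begin


lemma translate_integral:
  fixes f :: "'a::euclidean_space \<Rightarrow> real"
  assumes "f \<in> borel_measurable borel"
  shows "integral\<^sup>L lborel (\<lambda>x. f (x + c)) = integral\<^sup>L lborel f"
proof -
  have "integral\<^sup>L lborel f = integral\<^sup>L (distr lborel borel ((+) c)) f"
    by (simp add: lborel_distr_plus)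
  also have "\<dots> = integral\<^sup>L lborel (\<lambda>x. f (c + x))"
    by (rule integral_distr) (auto simp: assms)
  finally show ?thesis by (simp add: add.commute)
qed

lemma translate_integrable:
  fixes f :: "'a::euclidean_space \<Rightarrow> real"
  assumes "f \<in> borel_measurable borel" "integrable lborel f"
  shows "integrable lborel (\<lambda>x. f (x + c))"
proof -
  have "integrable (distr lborel borel ((+) c)) f"
    by (simp add: lborel_distr_plus assms)
  then have "integrable lborel (\<lambda>x. f (c + x))"
    by (subst (asm) integrable_distr_eq) (auto simp: assms)
  then show ?thesis by (simp add: add.commute)
qed

lemma ibp_core:
  fixes f g :: "real^'n \<Rightarrow> real" and e :: "real^'n"
  assumes der: "\<And>x t. ((\<lambda>s. f (x + s *\<^sub>R e)) has_real_derivative g (x + t *\<^sub>R e)) (at t)"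
    and contg: "continuous_on UNIV g"
    and intf: "integrable lborel f" and intg: "integrable lborel g"
  shows "integral\<^sup>L lborel g = 0"
proof -
  have fm: "f \<in> borel_measurable borel"
    using borel_measurable_integrable[OF intf] by (simp add: measurable_lborel1)
  have gm[measurable]: "g \<in> borel_measurable borel"
    using contg by (rule borel_measurable_continuous_onI)
  define h where "h = (\<lambda>(s::real, x::real^'n). indicator {0..1} s * g (x + s *\<^sub>R e))"
  have hm: "h \<in> borel_measurable (lborel \<Otimes>\<^sub>M lborel)"
  proof -
    have a: "(\<lambda>p::real\<times>(real^'n). g (snd p + fst p *\<^sub>R e)) \<in> borel_measurable borel"
      by (intro borel_measurable_continuous_onI continuous_on_compose2[OF contg] continuous_intros) auto
    have b: "(indicator ({0..1} \<times> UNIV) :: real\<times>(real^'n) \<Rightarrow> real) \<in> borel_measurable borel"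
      by (intro borel_measurable_indicator borel_closed closed_Times) auto
    have "h = (\<lambda>p. indicator ({0..1} \<times> UNIV) p * g (snd p + fst p *\<^sub>R e))"
      by (auto simp: h_def fun_eq_iff indicator_def)
    then show ?thesis unfolding lborel_prod measurable_lborel1 using a b by simp
  qed
  have tr: "integral\<^sup>L lborel (\<lambda>x. g (x + s *\<^sub>R e)) = integral\<^sup>L lborel g" for s
    by (rule translate_integral) simp
  have tri: "integrable lborel (\<lambda>x. g (x + s *\<^sub>R e))" for s
    by (rule translate_integrable) (auto simp: intg)
  have tra: "integral\<^sup>L lborel (\<lambda>x. norm (g (x + s *\<^sub>R e))) = integral\<^sup>L lborel (\<lambda>x. norm (g x))" for s
    by (rule translate_integral[where f="\<lambda>x. norm (g x)"]) simp
  have ih: "integrable (lborel \<Otimes>\<^sub>M lborel) h"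
  proof (rule lborel_pair.Fubini_integrable[OF hm])
    have "(\<lambda>s. LINT x|lborel. norm (h (s, x))) = (\<lambda>s. indicator {0..1} s * integral\<^sup>L lborel (\<lambda>x. norm (g x)))"
      using tra by (auto simp: h_def indicator_def fun_eq_iff)
    then show "integrable lborel (\<lambda>s. LINT x|lborel. norm (h (s, x)))"
      by (simp add: integrable_mult_left)
    show "AE s in lborel. integrable lborel (\<lambda>x. h (s, x))"
      by (auto simp: h_def intro!: integrable_mult_right tri)
  qed
  have "(LINT x|lborel. LINT s|lborel. h (s, x)) = (LINT s|lborel. LINT x|lborel. h (s, x))"
    using lborel_pair.Fubini_integral[of "\<lambda>s x. h (s, x)"] ih by simp
  moreover have "(LINT s|lborel. LINT x|lborel. h (s, x)) = integral\<^sup>L lborel g"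
  proof -
    have "(\<lambda>s. LINT x|lborel. h (s, x)) = (\<lambda>s. indicator {0..1} s * integral\<^sup>L lborel g)"
      by (auto simp: h_def tr fun_eq_iff)
    then show ?thesis by simp
  qed
  moreover have "(LINT s|lborel. h (s, x)) = f (x + e) - f x" for x
  proof -
    have "(LINT s|lborel. h (s, x)) = (LINT s|lborel. indicator {0..1} s *\<^sub>R g (x + s *\<^sub>R e))"
      by (simp add: h_def)
    also have "\<dots> = f (x + 1 *\<^sub>R e) - f (x + 0 *\<^sub>R e)"
    proof (rule integral_FTC_atLeastAtMost[where F="\<lambda>s. f (x + s *\<^sub>R e)"])
      show "((\<lambda>s. f (x + s *\<^sub>R e)) has_vector_derivative g (x + t *\<^sub>R e)) (at t within {0..1})" for t
        using der[of x t] by (simp add: has_real_derivative_iff_has_vector_derivative has_vector_derivative_at_within)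
      show "continuous_on {0..1} (\<lambda>s. g (x + s *\<^sub>R e))"
        by (intro continuous_on_compose2[OF contg] continuous_intros) auto
    qed simp
    finally show ?thesis by simp
  qed
  moreover have "(LINT x|lborel. f (x + e) - f x) = 0"
    using translate_integral[OF fm, of e] translate_integrable[OF fm intf, of e] intf by simp
  ultimately show ?thesis by simp
qed

lemma pd_has:
  fixes f :: "real^'n \<Rightarrow> real"
  shows "(f has_derivative f') (at x) \<Longrightarrow> pderiv_i i f x = f' (axis i 1)"
  unfolding pderiv_i_def by (metis frechet_derivative_at)

lemma pd_works:
  fixes f :: "real^'n \<Rightarrow> real"
  shows "f differentiable (at x) \<Longrightarrow> (f has_derivative frechet_derivative f (at x)) (at x)"
  by (rule frechet_derivative_works[THEN iffD1])

lemma pd_add: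
  fixes f g :: "real^'n \<Rightarrow> real"
  assumes "f differentiable (at x)" "g differentiable (at x)"
  shows "pderiv_i i (\<lambda>x. f x + g x) x = pderiv_i i f x + pderiv_i i g x"
  using has_derivative_add[OF pd_works[OF assms(1)] pd_works[OF assms(2)]]
  by (subst pd_has) (auto simp: pderiv_i_def)

lemma pd_mult:
  fixes f g :: "real^'n \<Rightarrow> real"
  assumes "f differentiable (at x)" "g differentiable (at x)"
  shows "pderiv_i i (\<lambda>x. f x * g x) x = pderiv_i i f x * g x + f x * pderiv_i i g x"
proof -
  have "((\<lambda>x. f x * g x) has_derivative (\<lambda>h. frechet_derivative f (at x) h * g x + f x * frechet_derivative g (at x) h)) (at x)"
    using has_derivative_mult[OF pd_works[OF assms(1)] pd_works[OF assms(2)]]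
    by (rule has_derivative_eq_rhs) (auto simp: fun_eq_iff algebra_simps)
  then show ?thesis by (subst pd_has) (auto simp: pderiv_i_def)
qed

lemma pd_cmult:
  fixes f :: "real^'n \<Rightarrow> real"
  assumes "f differentiable (at x)"
  shows "pderiv_i i (\<lambda>x. c * f x) x = c * pderiv_i i f x"
  using has_derivative_mult[OF has_derivative_const[of c] pd_works[OF assms(1)]]
  by (subst pd_has) (auto simp: pderiv_i_def)

lemma pd_const:
  shows "pderiv_i i (\<lambda>x::real^'n. c::real) x = 0"
  using has_derivative_const[of c] by (subst pd_has) auto

lemma pd_divide:
  fixes f g :: "real^'n \<Rightarrow> real"
  assumes "f differentiable (at x)" "g differentiable (at x)" "g x \<noteq> 0"
  shows "pderiv_i i (\<lambda>x. f x / g x) x = (pderiv_i i f x * g x - f x * pderiv_i i g x) / (g x)\<^sup>2"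
proof -
  have "((\<lambda>x. f x / g x) has_derivative
     (\<lambda>h. - f x * (inverse (g x) * frechet_derivative g (at x) h * inverse (g x)) + frechet_derivative f (at x) h / g x)) (at x)"
    using has_derivative_divide[OF pd_works[OF assms(1)] pd_works[OF assms(2)] assms(3)] .
  then show ?thesis
    using assms(3) by (subst pd_has) (auto simp: pderiv_i_def field_simps power2_eq_square)
qed

lemma pd_ln:
  fixes f :: "real^'n \<Rightarrow> real"
  assumes "f differentiable (at x)" "f x > 0"
  shows "pderiv_i i (\<lambda>x. ln (f x)) x = pderiv_i i f x / f x"
proof -
  have "((\<lambda>x. ln (f x)) has_derivative (\<lambda>h. frechet_derivative f (at x) h * inverse (f x))) (at x)"
    using has_derivative_ln[OF assms(2) pd_works[OF assms(1)]] by (simp add: mult.commute)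
  then show ?thesis by (subst pd_has) (auto simp: pderiv_i_def field_simps)
qed

lemma pd_sum:
  fixes f :: "'k \<Rightarrow> real^'n \<Rightarrow> real"
  assumes "finite S" "\<And>k. k \<in> S \<Longrightarrow> f k differentiable (at x)"
  shows "pderiv_i i (\<lambda>x. \<Sum>k\<in>S. f k x) x = (\<Sum>k\<in>S. pderiv_i i (f k) x)"
proof -
  have "((\<lambda>x. \<Sum>k\<in>S. f k x) has_derivative (\<lambda>h. \<Sum>k\<in>S. frechet_derivative (f k) (at x) h)) (at x)"
    using assms by (intro has_derivative_sum pd_works) auto
  then show ?thesis by (subst pd_has) (auto simp: pderiv_i_def)
qed

lemma pd_line:
  fixes f :: "real^'n \<Rightarrow> real"
  assumes "f differentiable (at (x + t *\<^sub>R axis i 1))"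
  shows "((\<lambda>s. f (x + s *\<^sub>R axis i 1)) has_real_derivative pderiv_i i f (x + t *\<^sub>R axis i 1)) (at t)"
proof -
  let ?y = "x + t *\<^sub>R axis i 1"
  have l: "linear (frechet_derivative f (at ?y))"
    using pd_works[OF assms] has_derivative_linear by blast
  have d1: "((\<lambda>s. x + s *\<^sub>R axis i 1) has_derivative (\<lambda>h. h *\<^sub>R axis i 1)) (at t)"
    by (auto intro!: derivative_eq_intros)
  have "((\<lambda>s. f (x + s *\<^sub>R axis i 1)) has_derivative (\<lambda>h. frechet_derivative f (at ?y) (h *\<^sub>R axis i 1))) (at t)"
    using has_derivative_compose[OF d1 pd_works[OF assms]] by simp
  then have "((\<lambda>s. f (x + s *\<^sub>R axis i 1)) has_derivative (\<lambda>h. h * pderiv_i i f ?y)) (at t)"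
    using linear_scale[OF l] by (simp add: pderiv_i_def)
  then show ?thesis
    unfolding has_field_derivative_def
    by (rule has_derivative_eq_rhs) (auto simp: fun_eq_iff mult.commute)
qed

lemma ibp_pd:
  fixes f :: "real^'n \<Rightarrow> real"
  assumes "\<And>x. f differentiable (at x)" "continuous_on UNIV (pderiv_i i f)"
    "integrable lborel f" "integrable lborel (pderiv_i i f)"
  shows "integral\<^sup>L lborel (pderiv_i i f) = 0"
  by (rule ibp_core[where f=f and e="axis i 1"]) (auto intro: pd_line assms)

lemma cmeas:
  fixes f :: "real^'n \<Rightarrow> real"
  shows "continuous_on UNIV f \<Longrightarrow> f \<in> borel_measurable lborel"
  by (simp add: measurable_lborel1 borel_measurable_continuous_onI)

lemma ibound:
  fixes f g :: "real^'n \<Rightarrow> real"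
  assumes "integrable lborel g" "continuous_on UNIV f" "\<And>x. \<bar>f x\<bar> \<le> g x"
  shows "integrable lborel f"
proof (rule Bochner_Integration.integrable_bound[OF assms(1) cmeas[OF assms(2)]])
  show "AE x in lborel. norm (f x) \<le> norm (g x)"
    using assms(3) by (auto intro: order_trans[OF _ abs_ge_self])
qed

lemma abs_le_sq:
  fixes t :: real
  shows "\<bar>t\<bar> \<le> 1 + t\<^sup>2"
proof -
  have "0 \<le> (\<bar>t\<bar> - 1)\<^sup>2" by simp
  then have "2 * \<bar>t\<bar> \<le> t\<^sup>2 + 1" by (simp add: power2_eq_square algebra_simps abs_mult_self_eq)
  then show ?thesis using abs_ge_zero[of t] by linarith
qed

lemma axis_sum: "(\<Sum>k\<in>UNIV. axis j (1::real) $ k * f k) = f j"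
proof -
  have "(\<Sum>k\<in>UNIV. axis j (1::real) $ k * f k) = (\<Sum>k\<in>UNIV. if j = k then f k else 0)"
    by (rule sum.cong) (auto simp: axis_def)
  also have "\<dots> = f j" by simp
  finally show ?thesis .
qed

lemma diff_cont:
  fixes f :: "real^'n \<Rightarrow> real"
  shows "(\<And>x. f differentiable (at x)) \<Longrightarrow> continuous_on UNIV f"
  by (meson continuous_at_imp_continuous_on differentiable_imp_continuous_within)

lemma grad_nth[simp]: "grad f q $ k = pderiv_i k f q"
  by (simp add: grad_def)

lemma hess_nth[simp]: "hess f q $ i $ k = pderiv_i i (pderiv_i k f) q"
  by (simp add: hess_def)

lemma disc:
  fixes a b c :: real
  assumes h: "\<And>t. 0 \<le> a + 2*t*b + t\<^sup>2*c" and c: "c \<ge> 0"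
  shows "b\<^sup>2 \<le> a * c"
proof (cases "c = 0")
  case True
  have "b = 0"
  proof (rule ccontr)
    assume "b \<noteq> 0"
    have "0 \<le> a + 2*(-(a+1)/(2*b))*b + (-(a+1)/(2*b))\<^sup>2*c" by (rule h)
    then show False using \<open>b \<noteq> 0\<close> True by (simp add: field_simps)
  qed
  then show ?thesis using True by simp
next
  case False
  then have cp: "c > 0" using c by simp
  have "0 \<le> a + 2*(-b/c)*b + (-b/c)\<^sup>2*c" by (rule h)
  also have "a + 2*(-b/c)*b + (-b/c)\<^sup>2*c = a - b\<^sup>2/c"
    using cp by (simp add: field_simps power2_eq_square)
  finally show ?thesis using cp by (simp add: field_simps)
qed

lemma int_cs:
  fixes f g :: "'a \<Rightarrow> real"
  assumes "integrable M (\<lambda>x. f x * f x)" "integrable M (\<lambda>x. g x * g x)" "integrable M (\<lambda>x. f x * g x)"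
  shows "(integral\<^sup>L M (\<lambda>x. f x * g x))\<^sup>2 \<le> integral\<^sup>L M (\<lambda>x. f x * f x) * integral\<^sup>L M (\<lambda>x. g x * g x)"
proof (rule disc)
  show "0 \<le> integral\<^sup>L M (\<lambda>x. g x * g x)" by (rule Bochner_Integration.integral_nonneg) auto
  fix t
  have "(\<lambda>x. (f x + t * g x) * (f x + t * g x)) = (\<lambda>x. f x * f x + 2 * t * (f x * g x) + t\<^sup>2 * (g x * g x))"
    by (auto simp: fun_eq_iff algebra_simps power2_eq_square)
  moreover have "0 \<le> integral\<^sup>L M (\<lambda>x. (f x + t * g x) * (f x + t * g x))"
    by (rule Bochner_Integration.integral_nonneg) auto
  ultimately show "0 \<le> integral\<^sup>L M (\<lambda>x. f x * f x) + 2 * t * integral\<^sup>L M (\<lambda>x. f x * g x) + t\<^sup>2 * integral\<^sup>L M (\<lambda>x. g x * g x)"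
    using assms by simp
qed

lemma mcs:
  fixes M :: "real^'n^'n"
  assumes Ms: "transpose M = M" and pd: "\<And>v. v \<noteq> 0 \<Longrightarrow> v \<bullet> (M *v v) > 0"
  shows "(x \<bullet> (M *v y))\<^sup>2 \<le> (x \<bullet> (M *v x)) * (y \<bullet> (M *v y))"
proof (rule disc)
  show "0 \<le> y \<bullet> (M *v y)" using pd[of y] by (cases "y = 0") auto
  fix t
  have sy: "y \<bullet> (M *v x) = x \<bullet> (M *v y)"
    by (metis Ms dot_lmul_matrix vector_transpose_matrix inner_commute)
  have "0 \<le> (x + t *\<^sub>R y) \<bullet> (M *v (x + t *\<^sub>R y))"
    using pd[of "x + t *\<^sub>R y"] by (cases "x + t *\<^sub>R y = 0") auto
  also have "(x + t *\<^sub>R y) \<bullet> (M *v (x + t *\<^sub>R y)) = x \<bullet> (M *v x) + 2 * t * (x \<bullet> (M *v y)) + t\<^sup>2 * (y \<bullet> (M *v y))"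
    using sy by (simp add: matrix_vector_right_distrib matrix_vector_mult_scaleR inner_add_left inner_add_right power2_eq_square algebra_simps)
  finally show "0 \<le> x \<bullet> (M *v x) + 2 * t * (x \<bullet> (M *v y)) + t\<^sup>2 * (y \<bullet> (M *v y))" .
qed

locale omega =
  fixes \<Omega> :: "real^'n \<Rightarrow> real"
  assumes pos: "\<And>q. \<Omega> q > 0" and C2: "C2_fun \<Omega>" and L2: "integrable lborel (\<lambda>q. (\<Omega> q)\<^sup>2)"
    and norm1: "integral\<^sup>L lborel (\<lambda>q. (\<Omega> q)\<^sup>2) = 1"
    and fisher: "\<And>i j. integrable lborel (\<lambda>q. grad \<Omega> q $ i * grad \<Omega> q $ j)"
    and hessf: "\<And>i j. integrable lborel (\<lambda>q. \<Omega> q * hess \<Omega> q $ i $ j)"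
begin

lemma O_diff: "\<Omega> differentiable (at x)" using C2 by (simp add: C2_fun_def C1_fun_def)
lemma O_cont: "continuous_on UNIV \<Omega>" by (rule diff_cont[OF O_diff])
lemma O_nz: "\<Omega> q \<noteq> 0" using pos[of q] by simp

lemma G_cont: "continuous_on UNIV (pderiv_i k \<Omega>)"
proof -
  have "continuous_on UNIV (grad \<Omega>)" using C2 by (simp add: C2_fun_def C1_fun_def)
  then have "continuous_on UNIV (\<lambda>x. grad \<Omega> x $ k)" by (rule continuous_on_component)
  then show ?thesis by simp
qed

lemma G_diff: "pderiv_i k \<Omega> differentiable (at x)"
proof -
  have "grad \<Omega> differentiable (at x)" using C2 by (simp add: C2_fun_def)
  then obtain D where "(grad \<Omega> has_derivative D) (at x)" by (auto simp: differentiable_def)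
  from bounded_linear.has_derivative[OF bounded_linear_vec_nth[of k] this]
  have "((\<lambda>y. grad \<Omega> y $ k) has_derivative (\<lambda>h. D h $ k)) (at x)" .
  then show ?thesis by (auto simp: differentiable_def)
qed

lemma H_cont: "continuous_on UNIV (pderiv_i i (pderiv_i k \<Omega>))"
proof -
  have "continuous_on UNIV (hess \<Omega>)" using C2 by (simp add: C2_fun_def)
  then have "continuous_on UNIV (\<lambda>x. hess \<Omega> x $ i $ k)" by (intro continuous_on_component)
  then show ?thesis by simp
qed

lemma GG_int: "integrable lborel (\<lambda>q. pderiv_i i \<Omega> q * pderiv_i j \<Omega> q)"
  using fisher[of i j] by simp

lemma OH_int: "integrable lborel (\<lambda>q. \<Omega> q * pderiv_i i (pderiv_i k \<Omega>) q)"
  using hessf[of i k] by simp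

lemma adm:
  assumes "admissible \<Omega> T"
  shows "\<And>x. T differentiable (at x)" "continuous_on UNIV T" "continuous_on UNIV (pderiv_i i T)"
    "integrable lborel (\<lambda>q. (\<Omega> q)\<^sup>2 * (T q)\<^sup>2)" "integrable lborel (\<lambda>q. (\<Omega> q)\<^sup>2 * pderiv_i i T q)"
proof -
  show d: "\<And>x. T differentiable (at x)" using assms by (simp add: admissible_def C1_fun_def)
  show "continuous_on UNIV T" by (rule diff_cont[OF d])
  have "continuous_on UNIV (grad T)" using assms by (simp add: admissible_def C1_fun_def)
  then have "continuous_on UNIV (\<lambda>x. grad T x $ i)" by (rule continuous_on_component)
  then show "continuous_on UNIV (pderiv_i i T)" by simp
  show "integrable lborel (\<lambda>q. (\<Omega> q)\<^sup>2 * (T q)\<^sup>2)" using assms by (simp add: admissible_def)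
  show "integrable lborel (\<lambda>q. (\<Omega> q)\<^sup>2 * pderiv_i i T q)" using assms[unfolded admissible_def] by simp
qed

lemma int_O2T:
  assumes "admissible \<Omega> T"
  shows "integrable lborel (\<lambda>q. (\<Omega> q)\<^sup>2 * T q)"
proof (rule ibound[OF Bochner_Integration.integrable_add[OF L2 adm(4)[OF assms]]])
  show "continuous_on UNIV (\<lambda>q. (\<Omega> q)\<^sup>2 * T q)"
    using O_cont adm(2)[OF assms] by (intro continuous_intros)
  fix x
  have "\<bar>T x\<bar> \<le> 1 + (T x)\<^sup>2" by (rule abs_le_sq)
  then have "(\<Omega> x)\<^sup>2 * \<bar>T x\<bar> \<le> (\<Omega> x)\<^sup>2 * (1 + (T x)\<^sup>2)" by (intro mult_left_mono) auto
  then show "\<bar>(\<Omega> x)\<^sup>2 * T x\<bar> \<le> (\<Omega> x)\<^sup>2 + (\<Omega> x)\<^sup>2 * (T x)\<^sup>2"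
    by (simp add: abs_mult algebra_simps)
qed

lemma int_TOG:
  assumes "admissible \<Omega> T"
  shows "integrable lborel (\<lambda>q. T q * \<Omega> q * pderiv_i i \<Omega> q)"
proof (rule ibound[OF Bochner_Integration.integrable_add[OF adm(4)[OF assms] GG_int[of i i]]])
  show "continuous_on UNIV (\<lambda>q. T q * \<Omega> q * pderiv_i i \<Omega> q)"
    using O_cont adm(2)[OF assms] G_cont by (intro continuous_intros)
  fix x
  have A: "2 * \<bar>T x * \<Omega> x\<bar> * \<bar>pderiv_i i \<Omega> x\<bar> \<le> (T x * \<Omega> x)\<^sup>2 + (pderiv_i i \<Omega> x)\<^sup>2"
    using sum_squares_bound[of "\<bar>T x * \<Omega> x\<bar>" "\<bar>pderiv_i i \<Omega> x\<bar>"] by (simp add: power2_abs)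
  have B: "0 \<le> \<bar>T x * \<Omega> x\<bar> * \<bar>pderiv_i i \<Omega> x\<bar>" by simp
  from A B have "\<bar>T x * \<Omega> x\<bar> * \<bar>pderiv_i i \<Omega> x\<bar> \<le> (T x * \<Omega> x)\<^sup>2 + (pderiv_i i \<Omega> x)\<^sup>2" by linarith
  then show "\<bar>T x * \<Omega> x * pderiv_i i \<Omega> x\<bar> \<le> (\<Omega> x)\<^sup>2 * (T x)\<^sup>2 + pderiv_i i \<Omega> x * pderiv_i i \<Omega> x"
    by (simp add: abs_mult power2_eq_square algebra_simps)
qed

lemma ibp_T:
  assumes "admissible \<Omega> T"
  shows "wmean \<Omega> (\<lambda>q. grad T q $ i) = -2 * integral\<^sup>L lborel (\<lambda>q. T q * \<Omega> q * pderiv_i i \<Omega> q)"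
proof -
  note d = adm(1)[OF assms]
  define f where "f q = \<Omega> q * (\<Omega> q * T q)" for q
  have fd: "f differentiable (at x)" for x
    unfolding f_def using O_diff d by (intro differentiable_mult)
  have pf: "pderiv_i i f q = 2 * (T q * \<Omega> q * pderiv_i i \<Omega> q) + (\<Omega> q)\<^sup>2 * pderiv_i i T q" for q
  proof -
    have "pderiv_i i f q = pderiv_i i \<Omega> q * (\<Omega> q * T q) + \<Omega> q * (pderiv_i i \<Omega> q * T q + \<Omega> q * pderiv_i i T q)"
      unfolding f_def using O_diff d
      by (simp add: pd_mult differentiable_mult)
    then show ?thesis by (simp add: algebra_simps power2_eq_square)
  qed
  have pfe: "pderiv_i i f = (\<lambda>q. 2 * (T q * \<Omega> q * pderiv_i i \<Omega> q) + (\<Omega> q)\<^sup>2 * pderiv_i i T q)"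
    using pf by auto
  have i1: "integrable lborel (\<lambda>q. T q * \<Omega> q * pderiv_i i \<Omega> q)" by (rule int_TOG[OF assms])
  have i2: "integrable lborel (\<lambda>q. (\<Omega> q)\<^sup>2 * pderiv_i i T q)" by (rule adm(5)[OF assms])
  have "integral\<^sup>L lborel (pderiv_i i f) = 0"
  proof (rule ibp_pd[OF fd])
    show "continuous_on UNIV (pderiv_i i f)" unfolding pfe
      using O_cont adm(2,3)[OF assms] G_cont by (intro continuous_intros)
    show "integrable lborel f"
      using int_O2T[OF assms] unfolding f_def[abs_def] by (simp add: power2_eq_square mult.assoc)
    show "integrable lborel (pderiv_i i f)" unfolding pfe using i1 i2 by simp
  qed
  then have "2 * integral\<^sup>L lborel (\<lambda>q. T q * \<Omega> q * pderiv_i i \<Omega> q) + integral\<^sup>L lborel (\<lambda>q. (\<Omega> q)\<^sup>2 * pderiv_i i T q) = 0"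
    unfolding pfe using i1 i2 by simp
  then show ?thesis by (simp add: wmean_def)
qed

lemma adm_one: "admissible \<Omega> (\<lambda>q. 1)"
proof -
  have g: "grad (\<lambda>q::real^'n. 1::real) = (\<lambda>q. 0)"
    by (auto simp: grad_def pd_const vec_eq_iff)
  show ?thesis unfolding admissible_def C1_fun_def g using L2 by simp
qed

lemma OG_zero: "integral\<^sup>L lborel (\<lambda>q. \<Omega> q * pderiv_i i \<Omega> q) = 0"
  using ibp_T[OF adm_one, of i] by (simp add: wmean_def pd_const)

lemma OG_int: "integrable lborel (\<lambda>q. \<Omega> q * pderiv_i i \<Omega> q)"
  using int_TOG[OF adm_one, of i] by simp

definition S :: "real^'n \<Rightarrow> real^'n \<Rightarrow> real" where
  "S w q = (\<Sum>k\<in>UNIV. w$k * pderiv_i k \<Omega> q)"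

definition Tw :: "real^'n \<Rightarrow> real^'n \<Rightarrow> real" where
  "Tw w q = S w q / \<Omega> q"

lemma S_diff: "S w differentiable (at x)"
  unfolding S_def[abs_def] using G_diff by (intro differentiable_sum differentiable_mult differentiable_const) auto

lemma S_cont: "continuous_on UNIV (S w)"
  unfolding S_def[abs_def] using G_cont by (intro continuous_intros)

lemma S_pd: "pderiv_i i (S w) q = (\<Sum>k\<in>UNIV. w$k * pderiv_i i (pderiv_i k \<Omega>) q)"
  unfolding S_def[abs_def] using G_diff
  by (subst pd_sum) (auto intro!: differentiable_mult simp: pd_cmult)

lemma S_axis: "S (axis j 1) q = pderiv_i j \<Omega> q"
  unfolding S_def by (rule axis_sum)

lemma SS_eq: "(\<lambda>q. S w q * S z q) = (\<lambda>q. \<Sum>k\<in>UNIV. \<Sum>l\<in>UNIV. w$k * z$l * (pderiv_i k \<Omega> q * pderiv_i l \<Omega> q))"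
  by (auto simp: S_def sum_product fun_eq_iff intro!: sum.cong simp: algebra_simps)

lemma SS_int: "integrable lborel (\<lambda>q. S w q * S z q)"
  unfolding SS_eq
  by (intro Bochner_Integration.integrable_sum integrable_mult_right GG_int)

lemma SS_integral: "integral\<^sup>L lborel (\<lambda>q. S w q * S z q) =
   (\<Sum>k\<in>UNIV. \<Sum>l\<in>UNIV. w$k * z$l * integral\<^sup>L lborel (\<lambda>q. pderiv_i k \<Omega> q * pderiv_i l \<Omega> q))"
proof -
  show ?thesis unfolding SS_eq
    using GG_int by (simp add: Bochner_Integration.integral_sum integrable_mult_right Bochner_Integration.integrable_sum)
qed

lemma OS_eq: "(\<lambda>q. \<Omega> q * S w q) = (\<lambda>q. \<Sum>k\<in>UNIV. w$k * (\<Omega> q * pderiv_i k \<Omega> q))"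
  by (auto simp: S_def sum_distrib_left fun_eq_iff intro!: sum.cong simp: algebra_simps)

lemma OS_int: "integrable lborel (\<lambda>q. \<Omega> q * S w q)"
  unfolding OS_eq by (intro Bochner_Integration.integrable_sum integrable_mult_right OG_int)

lemma OS_zero: "integral\<^sup>L lborel (\<lambda>q. \<Omega> q * S w q) = 0"
proof -
  have "integral\<^sup>L lborel (\<lambda>q. \<Omega> q * S w q) = (\<Sum>k\<in>UNIV. w$k * integral\<^sup>L lborel (\<lambda>q. \<Omega> q * pderiv_i k \<Omega> q))"
    unfolding OS_eq using OG_int
    by (subst Bochner_Integration.integral_sum) (auto intro: integrable_mult_right)
  then show ?thesis by (simp add: OG_zero)
qed

lemma SH_int: "integrable lborel (\<lambda>q. \<Omega> q * (\<Sum>k\<in>UNIV. w$k * pderiv_i i (pderiv_i k \<Omega>) q))"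
proof -
  have "(\<lambda>q. \<Omega> q * (\<Sum>k\<in>UNIV. w$k * pderiv_i i (pderiv_i k \<Omega>) q)) =
      (\<lambda>q. \<Sum>k\<in>UNIV. w$k * (\<Omega> q * pderiv_i i (pderiv_i k \<Omega>) q))"
    by (auto simp: sum_distrib_left fun_eq_iff intro!: sum.cong simp: algebra_simps)
  then show ?thesis by (simp add: Bochner_Integration.integrable_sum integrable_mult_right OH_int)
qed

lemma Tw_diff: "Tw w differentiable (at x)"
  unfolding Tw_def[abs_def] using S_diff O_diff O_nz by (intro differentiable_divide) auto

lemma Tw_pd: "pderiv_i i (Tw w) q = ((\<Sum>k\<in>UNIV. w$k * pderiv_i i (pderiv_i k \<Omega>) q) * \<Omega> q - S w q * pderiv_i i \<Omega> q) / (\<Omega> q)\<^sup>2"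
  unfolding Tw_def[abs_def] using S_diff O_diff O_nz by (simp add: pd_divide S_pd)

lemma O2_Tw_pd: "(\<Omega> q)\<^sup>2 * pderiv_i i (Tw w) q = \<Omega> q * (\<Sum>k\<in>UNIV. w$k * pderiv_i i (pderiv_i k \<Omega>) q) - S w q * S (axis i 1) q"
  using O_nz[of q] by (simp add: Tw_pd S_axis field_simps)

lemma Tw_adm: "admissible \<Omega> (Tw w)"
  unfolding admissible_def C1_fun_def
proof (intro conjI allI)
  show "Tw w differentiable (at x)" for x by (rule Tw_diff)
  have eq: "grad (Tw w) = (\<lambda>q. \<chi> i. ((\<Sum>k\<in>UNIV. w$k * pderiv_i i (pderiv_i k \<Omega>) q) * \<Omega> q - S w q * pderiv_i i \<Omega> q) / (\<Omega> q)\<^sup>2)"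
    by (simp add: fun_eq_iff vec_eq_iff Tw_pd)
  show "continuous_on UNIV (grad (Tw w))" unfolding eq
    using H_cont O_cont S_cont G_cont O_nz by (intro continuous_intros) auto
  have "(\<lambda>q. (\<Omega> q)\<^sup>2 * (Tw w q)\<^sup>2) = (\<lambda>q. S w q * S w q)"
    using O_nz by (auto simp: Tw_def fun_eq_iff power2_eq_square)
  then show "integrable lborel (\<lambda>q. (\<Omega> q)\<^sup>2 * (Tw w q)\<^sup>2)" using SS_int by simp
  fix i
  show "integrable lborel (\<lambda>q. (\<Omega> q)\<^sup>2 * grad (Tw w) q $ i)"
    unfolding grad_nth O2_Tw_pd using SH_int SS_int by simp
qed

lemma mean_grad_Tw: "wmean \<Omega> (\<lambda>q. grad (Tw w) q $ j) = -2 * integral\<^sup>L lborel (\<lambda>q. S w q * S (axis j 1) q)"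
proof -
  have "(\<lambda>q. Tw w q * \<Omega> q * pderiv_i j \<Omega> q) = (\<lambda>q. S w q * S (axis j 1) q)"
    using O_nz by (auto simp: Tw_def S_axis fun_eq_iff)
  then show ?thesis using ibp_T[OF Tw_adm, where i=j] by simp
qed

lemma OH_eq: "integral\<^sup>L lborel (\<lambda>q. \<Omega> q * pderiv_i i (pderiv_i j \<Omega>) q) =
    - integral\<^sup>L lborel (\<lambda>q. pderiv_i i \<Omega> q * pderiv_i j \<Omega> q)"
proof -
  have sum1: "(\<Sum>k\<in>UNIV. axis j 1 $ k * pderiv_i i (pderiv_i k \<Omega>) q) = pderiv_i i (pderiv_i j \<Omega>) q" for q
    by (rule axis_sum)
  have "wmean \<Omega> (\<lambda>q. grad (Tw (axis j 1)) q $ i) =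
     integral\<^sup>L lborel (\<lambda>q. \<Omega> q * pderiv_i i (pderiv_i j \<Omega>) q) - integral\<^sup>L lborel (\<lambda>q. pderiv_i j \<Omega> q * pderiv_i i \<Omega> q)"
    unfolding wmean_def grad_nth O2_Tw_pd sum1 S_axis using OH_int GG_int by simp
  moreover have "wmean \<Omega> (\<lambda>q. grad (Tw (axis j 1)) q $ i) = -2 * integral\<^sup>L lborel (\<lambda>q. pderiv_i j \<Omega> q * pderiv_i i \<Omega> q)"
    unfolding mean_grad_Tw S_axis ..
  ultimately show ?thesis by (simp add: mult.commute)
qed

definition Fm :: "real^'n^'n" where
  "Fm = (\<chi> i j. 4 * integral\<^sup>L lborel (\<lambda>q. pderiv_i i \<Omega> q * pderiv_i j \<Omega> q))"

lemma Fm_entry_sym: "Fm $ i $ j = Fm $ j $ i"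
  by (simp add: Fm_def mult.commute)

lemma Fm_sym: "transpose Fm = Fm"
  by (simp add: transpose_def vec_eq_iff Fm_entry_sym)

lemma SS_F: "integral\<^sup>L lborel (\<lambda>q. S w q * S z q) = (w \<bullet> (Fm *v z)) / 4"
  by (simp add: SS_integral inner_vec_def matrix_vector_mult_def Fm_def sum_distrib_left sum_divide_distrib algebra_simps)

lemma Fm_psd: "w \<bullet> (Fm *v w) \<ge> 0"
proof -
  have "0 \<le> integral\<^sup>L lborel (\<lambda>q. S w q * S w q)" by (rule Bochner_Integration.integral_nonneg) auto
  then show ?thesis by (simp add: SS_F)
qed

lemma mv_axis: "((A::real^'n^'n) *v axis j 1) $ k = A $ k $ j"
  by (simp add: matrix_vector_mult_def axis_sum mult.commute[of "A $ k $ _"])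

lemma mean_grad_Tw_F: "wmean_vec \<Omega> (grad (Tw w)) = (-(1/2)) *\<^sub>R (Fm *v w)"
proof -
  have "wmean \<Omega> (\<lambda>q. grad (Tw w) q $ j) = -(1/2) * (Fm *v w) $ j" for j
  proof -
    have a: "(Fm *v w) $ j = (\<Sum>k\<in>UNIV. Fm$j$k * w$k)" by (simp add: matrix_vector_mult_def)
    have b: "w \<bullet> (Fm *v axis j 1) = (\<Sum>k\<in>UNIV. w$k * Fm$k$j)" by (simp add: inner_vec_def mv_axis)
    have "w \<bullet> (Fm *v axis j 1) = (Fm *v w) $ j"
      unfolding a b by (rule sum.cong) (auto simp: Fm_entry_sym[of _ j] mult.commute)
    then show ?thesis using mean_grad_Tw[of w j] by (simp add: SS_F)
  qed
  then show ?thesis by (simp add: wmean_vec_def vec_eq_iff)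
qed

lemma wmean_Tw: "wmean \<Omega> (Tw w) = 0"
proof -
  have "(\<lambda>q. (\<Omega> q)\<^sup>2 * Tw w q) = (\<lambda>q. \<Omega> q * S w q)"
    using O_nz by (auto simp: Tw_def fun_eq_iff power2_eq_square)
  then show ?thesis by (simp add: wmean_def OS_zero)
qed

lemma wcov_Tw: "wcov \<Omega> (Tw w) (Tw w) = (w \<bullet> (Fm *v w)) / 4"
proof -
  have "(\<lambda>q. (\<Omega> q)\<^sup>2 * (Tw w q * Tw w q)) = (\<lambda>q. S w q * S w q)"
    using O_nz by (auto simp: Tw_def fun_eq_iff power2_eq_square)
  then show ?thesis by (simp add: wcov_def wmean_Tw) (simp add: wmean_def SS_F)
qed

lemma Q_eq: "Qmat M \<Omega> = Fm ** M"
proof -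
  have l1: "pderiv_i j (\<lambda>q. ln ((\<Omega> q)\<^sup>2)) = (\<lambda>y. 2 * Tw (axis j 1) y)" for j
  proof
    fix y
    have "pderiv_i j (\<lambda>q. ln ((\<Omega> q)\<^sup>2)) y = pderiv_i j (\<lambda>q. \<Omega> q * \<Omega> q) y / (\<Omega> y)\<^sup>2"
      using O_diff pos[of y] by (simp add: pd_ln power2_eq_square differentiable_mult)
    also have "\<dots> = 2 * Tw (axis j 1) y"
      using O_diff O_nz[of y] by (simp add: pd_mult Tw_def S_axis power2_eq_square field_simps)
    finally show "pderiv_i j (\<lambda>q. ln ((\<Omega> q)\<^sup>2)) y = 2 * Tw (axis j 1) y" .
  qed
  have "- wmean_mat \<Omega> (hess (\<lambda>q. ln ((\<Omega> q)\<^sup>2))) = Fm"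
  proof -
    have "- wmean \<Omega> (\<lambda>q. hess (\<lambda>q. ln ((\<Omega> q)\<^sup>2)) q $ i $ j) = Fm $ i $ j" for i j
    proof -
      have "(\<lambda>q. hess (\<lambda>q. ln ((\<Omega> q)\<^sup>2)) q $ i $ j) = (\<lambda>q. 2 * grad (Tw (axis j 1)) q $ i)"
        using Tw_diff by (auto simp: l1 pd_cmult fun_eq_iff)
      then have "wmean \<Omega> (\<lambda>q. hess (\<lambda>q. ln ((\<Omega> q)\<^sup>2)) q $ i $ j) = 2 * wmean \<Omega> (\<lambda>q. grad (Tw (axis j 1)) q $ i)"
        by (simp add: wmean_def mult.left_commute[of _ 2])
      also have "\<dots> = - 4 * integral\<^sup>L lborel (\<lambda>q. pderiv_i j \<Omega> q * pderiv_i i \<Omega> q)"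
        using mean_grad_Tw[of "axis j 1" i] by (simp add: S_axis)
      finally show ?thesis by (simp add: Fm_def mult.commute)
    qed
    then show ?thesis by (simp add: wmean_mat_def vec_eq_iff)
  qed
  then show ?thesis by (simp add: Qmat_def)
qed

lemma qp_eq: "mean_quantum_potential hbar M \<Omega> =
    hbar\<^sup>2 / 2 * (\<Sum>i\<in>UNIV. \<Sum>j\<in>UNIV. M $ i $ j * integral\<^sup>L lborel (\<lambda>q. pderiv_i i \<Omega> q * pderiv_i j \<Omega> q))"
proof -
  have e: "(\<lambda>q. \<Omega> q * (\<Sum>i\<in>UNIV. \<Sum>j\<in>UNIV. M $ i $ j * hess \<Omega> q $ i $ j)) =
     (\<lambda>q. \<Sum>i\<in>UNIV. \<Sum>j\<in>UNIV. M $ i $ j * (\<Omega> q * pderiv_i i (pderiv_i j \<Omega>) q))"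
    by (auto simp: fun_eq_iff sum_distrib_left intro!: sum.cong simp: algebra_simps)
  show ?thesis
    unfolding mean_quantum_potential_def e using OH_int
    by (simp add: Bochner_Integration.integral_sum Bochner_Integration.integrable_sum integrable_mult_right
        OH_eq sum_negf)
qed

lemma T_bound:
  assumes T: "admissible \<Omega> T"
  shows "(w \<bullet> wmean_vec \<Omega> (grad T))\<^sup>2 \<le> wcov \<Omega> T T * (w \<bullet> (Fm *v w))" and "wcov \<Omega> T T \<ge> 0"
proof -
  define c0 where "c0 = wmean \<Omega> T"
  define f where "f q = (T q - c0) * \<Omega> q" for q
  have i1: "integrable lborel (\<lambda>q. (\<Omega> q)\<^sup>2 * (T q)\<^sup>2)" by (rule adm(4)[OF T])
  have i2: "integrable lborel (\<lambda>q. (\<Omega> q)\<^sup>2 * T q)" by (rule int_O2T[OF T])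
  have ff: "(\<lambda>q. f q * f q) = (\<lambda>q. (\<Omega> q)\<^sup>2 * (T q)\<^sup>2 - 2 * c0 * ((\<Omega> q)\<^sup>2 * T q) + c0\<^sup>2 * (\<Omega> q)\<^sup>2)"
    by (auto simp: f_def fun_eq_iff algebra_simps power2_eq_square)
  have iff: "integrable lborel (\<lambda>q. f q * f q)" unfolding ff using i1 i2 L2 by simp
  have "integral\<^sup>L lborel (\<lambda>q. f q * f q) = integral\<^sup>L lborel (\<lambda>q. (\<Omega> q)\<^sup>2 * (T q)\<^sup>2) - 2 * c0 * c0 + c0\<^sup>2"
    unfolding ff using i1 i2 L2 norm1 by (simp add: c0_def wmean_def)
  also have "\<dots> = wcov \<Omega> T T"
    by (simp add: wcov_def c0_def wmean_def power2_eq_square)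
  finally have Iff: "integral\<^sup>L lborel (\<lambda>q. f q * f q) = wcov \<Omega> T T" .
  have fg: "(\<lambda>q. f q * S w q) = (\<lambda>q. (\<Sum>k\<in>UNIV. w$k * (T q * \<Omega> q * pderiv_i k \<Omega> q)) - c0 * (\<Omega> q * S w q))"
  proof
    fix q
    have "T q * \<Omega> q * S w q = (\<Sum>k\<in>UNIV. w$k * (T q * \<Omega> q * pderiv_i k \<Omega> q))"
      unfolding S_def sum_distrib_left by (rule sum.cong) (auto simp: algebra_simps)
    then show "f q * S w q = (\<Sum>k\<in>UNIV. w$k * (T q * \<Omega> q * pderiv_i k \<Omega> q)) - c0 * (\<Omega> q * S w q)"
      by (simp add: f_def algebra_simps)
  qed
  have itog: "integrable lborel (\<lambda>q. \<Sum>k\<in>UNIV. w$k * (T q * \<Omega> q * pderiv_i k \<Omega> q))"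
    using int_TOG[OF T] by (intro Bochner_Integration.integrable_sum integrable_mult_right) auto
  have ifg: "integrable lborel (\<lambda>q. f q * S w q)" unfolding fg using itog OS_int by simp
  have Ifg: "integral\<^sup>L lborel (\<lambda>q. f q * S w q) = (\<Sum>k\<in>UNIV. w$k * integral\<^sup>L lborel (\<lambda>q. T q * \<Omega> q * pderiv_i k \<Omega> q))"
    unfolding fg using itog OS_int int_TOG[OF T] by (simp add: OS_zero Bochner_Integration.integral_sum integrable_mult_right)
  have wv: "w \<bullet> wmean_vec \<Omega> (grad T) = -2 * integral\<^sup>L lborel (\<lambda>q. f q * S w q)"
    unfolding Ifg using ibp_T[OF T]
    by (simp add: inner_vec_def wmean_vec_def sum_distrib_left algebra_simps del: grad_nth)
  have cs: "(integral\<^sup>L lborel (\<lambda>q. f q * S w q))\<^sup>2 \<le> integral\<^sup>L lborel (\<lambda>q. f q * f q) * integral\<^sup>L lborel (\<lambda>q. S w q * S w q)"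
    by (rule int_cs[OF iff SS_int ifg])
  show "(w \<bullet> wmean_vec \<Omega> (grad T))\<^sup>2 \<le> wcov \<Omega> T T * (w \<bullet> (Fm *v w))"
    using cs unfolding wv Iff SS_F by (simp add: power_mult_distrib)
  have "0 \<le> integral\<^sup>L lborel (\<lambda>q. f q * f q)" by (rule Bochner_Integration.integral_nonneg) auto
  then show "wcov \<Omega> T T \<ge> 0" using Iff by simp
qed

lemma qp_ge:
  fixes M :: "real^'n^'n"
  assumes Ms: "transpose M = M" and pd: "\<And>v. v \<noteq> 0 \<Longrightarrow> v \<bullet> (M *v v) > 0"
    and u: "u \<noteq> 0" and eq: "(M *v u) \<bullet> (Fm *v (M *v u)) = lam * (u \<bullet> (M *v u))"
  shows "lam \<le> 4 * (\<Sum>i\<in>UNIV. \<Sum>j\<in>UNIV. M $ i $ j * integral\<^sup>L lborel (\<lambda>q. pderiv_i i \<Omega> q * pderiv_i j \<Omega> q))"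
proof -
  define D where "D = u \<bullet> (M *v u)"
  have Dp: "D > 0" using pd[OF u] by (simp add: D_def)
  define Q where "Q q = (\<Sum>i\<in>UNIV. \<Sum>j\<in>UNIV. M $ i $ j * (pderiv_i i \<Omega> q * pderiv_i j \<Omega> q))" for q
  have Qg: "Q q = grad \<Omega> q \<bullet> (M *v grad \<Omega> q)" for q
    by (simp add: Q_def inner_vec_def matrix_vector_mult_def sum_distrib_left algebra_simps)
  have Sg: "S w q = u' \<bullet> (M *v grad \<Omega> q)" if "w = M *v u'" for w u' q
  proof -
    have "S w q = w \<bullet> grad \<Omega> q" by (simp add: S_def inner_vec_def)
    also have "\<dots> = u' \<bullet> (M *v grad \<Omega> q)" using that
      by (metis Ms dot_lmul_matrix vector_transpose_matrix inner_commute)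
    finally show ?thesis .
  qed
  have iQ: "integrable lborel Q" unfolding Q_def[abs_def]
    by (intro Bochner_Integration.integrable_sum integrable_mult_right GG_int)
  have IQ: "integral\<^sup>L lborel Q = (\<Sum>i\<in>UNIV. \<Sum>j\<in>UNIV. M $ i $ j * integral\<^sup>L lborel (\<lambda>q. pderiv_i i \<Omega> q * pderiv_i j \<Omega> q))"
    unfolding Q_def[abs_def] using GG_int
    by (simp add: Bochner_Integration.integral_sum Bochner_Integration.integrable_sum integrable_mult_right)
  have pw: "S (M *v u) q * S (M *v u) q \<le> D * Q q" for q
    using mcs[OF Ms pd, of u "grad \<Omega> q"] unfolding Sg[OF refl] Qg D_def by (simp add: power2_eq_square)
  have "lam * D = 4 * integral\<^sup>L lborel (\<lambda>q. S (M *v u) q * S (M *v u) q)"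
    using eq by (simp add: SS_F D_def)
  also have "\<dots> \<le> 4 * integral\<^sup>L lborel (\<lambda>q. D * Q q)"
    using pw SS_int iQ by (intro mult_left_mono integral_mono) auto
  also have "\<dots> = D * (4 * integral\<^sup>L lborel Q)" by simp
  finally have "lam * D \<le> D * (4 * integral\<^sup>L lborel Q)" .
  then have "lam \<le> 4 * integral\<^sup>L lborel Q" using Dp by (simp add: mult.commute)
  then show ?thesis by (simp add: IQ)
qed

end



lemma sym_dot:
  fixes M :: "real^'n^'n"
  assumes "transpose M = M"
  shows "x \<bullet> (M *v y) = (M *v x) \<bullet> y"
  by (metis assms dot_lmul_matrix vector_transpose_matrix)

lemma pd_inj:
  fixes M :: "real^'n^'n"
  assumes pd: "\<And>v. v \<noteq> 0 \<Longrightarrow> v \<bullet> (M *v v) > 0" and z: "M *v z = 0"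
  shows "z = 0"
  using pd[of z] z by (cases "z = 0") auto

lemma eig_finite:
  fixes F M :: "real^'n^'n"
  assumes Fs: "transpose F = F" and Ms: "transpose M = M"
    and pd: "\<And>v. v \<noteq> 0 \<Longrightarrow> v \<bullet> (M *v v) > 0"
  shows "finite {l. \<exists>v. v \<noteq> 0 \<and> (F ** M) *v v = l *\<^sub>R v}"
proof -
  define S where "S = {l. \<exists>v. v \<noteq> 0 \<and> (F ** M) *v v = l *\<^sub>R v}"
  define ev where "ev l = (SOME v. v \<noteq> 0 \<and> (F ** M) *v v = l *\<^sub>R v)" for l
  have ev: "ev l \<noteq> 0 \<and> F *v (M *v ev l) = l *\<^sub>R ev l" if "l \<in> S" for l
    using someI_ex[of "\<lambda>v. v \<noteq> 0 \<and> (F ** M) *v v = l *\<^sub>R v"] that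
    unfolding S_def ev_def by (auto simp: matrix_vector_mul_assoc)
  have orth: "ev l \<bullet> (M *v ev l') = 0" if "l \<in> S" "l' \<in> S" "l \<noteq> l'" for l l'
  proof -
    let ?a = "ev l" and ?b = "ev l'"
    have "(M *v ?b) \<bullet> (F *v (M *v ?a)) = (M *v ?a) \<bullet> (F *v (M *v ?b))"
      using sym_dot[OF Fs] by (simp add: inner_commute)
    then have "l * ((M *v ?b) \<bullet> ?a) = l' * ((M *v ?a) \<bullet> ?b)"
      using ev[OF that(1)] ev[OF that(2)] by simp
    moreover have "(M *v ?b) \<bullet> ?a = (M *v ?a) \<bullet> ?b"
      using sym_dot[OF Ms] by (simp add: inner_commute)
    ultimately have "(l - l') * (?a \<bullet> (M *v ?b)) = 0"
      using sym_dot[OF Ms, of ?a ?b] by (simp add: algebra_simps)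
    then show ?thesis using that(3) by simp
  qed
  have inj: "inj_on ev S"
  proof
    fix l l' assume "l \<in> S" "l' \<in> S" "ev l = ev l'"
    then have "l *\<^sub>R ev l = l' *\<^sub>R ev l" using ev by metis
    then show "l = l'" using ev[OF \<open>l \<in> S\<close>] by (simp add: scaleR_cancel_right)
  qed
  have "independent (ev ` S)"
    unfolding real_vector.independent_explicit_finite_subsets
  proof (intro allI impI ballI)
    fix T u v assume T: "T \<subseteq> ev ` S" "finite T" and sum0: "(\<Sum>v\<in>T. u v *\<^sub>R v) = 0" and v: "v \<in> T"
    have "0 = (\<Sum>x\<in>T. u x *\<^sub>R x) \<bullet> (M *v v)" using sum0 by simp
    also have "\<dots> = (\<Sum>x\<in>T. u x * (x \<bullet> (M *v v)))" by (simp add: inner_sum_left)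
    also have "\<dots> = u v * (v \<bullet> (M *v v))"
    proof -
      have "(\<Sum>x\<in>T - {v}. u x * (x \<bullet> (M *v v))) = 0"
      proof (rule sum.neutral, rule ballI)
        fix x assume x: "x \<in> T - {v}"
        then obtain l l' where "l \<in> S" "l' \<in> S" "x = ev l" "v = ev l'" using T v by blast
        moreover then have "l \<noteq> l'" using x by auto
        ultimately show "u x * (x \<bullet> (M *v v)) = 0" using orth by simp
      qed
      then show ?thesis using sum.remove[OF T(2) v, of "\<lambda>x. u x * (x \<bullet> (M *v v))"] by simp
    qed
    finally have "u v * (v \<bullet> (M *v v)) = 0" by simp
    moreover have "v \<noteq> 0" using T v ev by auto
    ultimately show "u v = 0" using pd[of v] by simp
  qed
  then have "finite (ev ` S)" using independent_bound by blast
  then show ?thesis using finite_imageD[OF _ inj] unfolding S_def by blast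
qed

lemma cont_mv[continuous_intros]:
  fixes A :: "real^'n^'m"
  shows "continuous_on S f \<Longrightarrow> continuous_on S (\<lambda>x. A *v f x)"
  by (rule continuous_on_compose2[of UNIV "(*v) A"])
     (auto intro: linear_continuous_on simp: matrix_vector_mul_linear linear_conv_bounded_linear[symmetric])

lemma quad_zero:
  fixes b c :: real
  assumes "\<And>t. 0 \<le> 2*t*b + t\<^sup>2*c" "c \<ge> 0"
  shows "b = 0"
proof (rule ccontr)
  assume "b \<noteq> 0"
  let ?t = "-b/(c+1)"
  have "0 \<le> 2*?t*b + ?t\<^sup>2*c" by (rule assms(1))
  also have "2*?t*b + ?t\<^sup>2*c = b\<^sup>2 * (-c - 2) / (c+1)\<^sup>2"
    using assms(2) by (simp add: field_simps power2_eq_square add_nonneg_eq_0_iff)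
  also have "\<dots> < 0" using \<open>b \<noteq> 0\<close> assms(2)
    by (intro divide_neg_pos mult_pos_neg) auto
  finally show False by simp
qed

lemma quad_exp:
  fixes a b c d :: "real^'n"
  shows "(a + t *\<^sub>R b) \<bullet> (c + t *\<^sub>R d) = a \<bullet> c + t * (a \<bullet> d + b \<bullet> c) + t\<^sup>2 * (b \<bullet> d)"
  by (simp add: inner_add_left inner_add_right power2_eq_square algebra_simps)

lemma eig_max:
  fixes F M :: "real^'n^'n"
  assumes Fs: "transpose F = F" and Fpsd: "\<And>w. w \<bullet> (F *v w) \<ge> 0"
    and Ms: "transpose M = M" and pd: "\<And>v. v \<noteq> 0 \<Longrightarrow> v \<bullet> (M *v v) > 0"
  shows "\<exists>u0 lam. u0 \<noteq> 0 \<and> F *v (M *v u0) = lam *\<^sub>R u0 \<and> lam = largest_eigenvalue (F ** M) \<and> lam \<ge> 0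
     \<and> (\<forall>u. (M *v u) \<bullet> (F *v (M *v u)) \<le> lam * (u \<bullet> (M *v u)))"
proof -
  define N where "N u = (M *v u) \<bullet> (F *v (M *v u))" for u
  define D where "D u = u \<bullet> (M *v u)" for u
  define R where "R u = N u / D u" for u
  have Dpos: "u \<noteq> 0 \<Longrightarrow> D u > 0" for u using pd by (simp add: D_def)
  have Rhom: "R (c *\<^sub>R u) = R u" if "c \<noteq> 0" for c u
  proof -
    have "N (c *\<^sub>R u) = c\<^sup>2 * N u" by (simp add: N_def matrix_vector_mult_scaleR power2_eq_square)
    moreover have "D (c *\<^sub>R u) = c\<^sup>2 * D u" by (simp add: D_def matrix_vector_mult_scaleR power2_eq_square)
    ultimately show ?thesis using that by (simp add: R_def)
  qed
  have "continuous_on (sphere 0 1) R"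
    unfolding R_def N_def D_def
    by (intro continuous_intros) (auto, metis pd norm_zero zero_neq_one less_irrefl)
  moreover have "sphere (0::real^'n) 1 \<noteq> {}"
  proof -
    obtain k :: 'n where True by simp
    have "axis k (1::real) \<in> sphere 0 1" by (simp add: norm_eq_sqrt_inner)
    then show ?thesis by blast
  qed
  ultimately obtain u0 where u0: "u0 \<in> sphere 0 1" "\<And>u. u \<in> sphere 0 1 \<Longrightarrow> R u \<le> R u0"
    using continuous_attains_sup[of "sphere 0 1" R] by auto
  have u0nz: "u0 \<noteq> 0" using u0(1) by auto
  define lam where "lam = R u0"
  have Rle: "R u \<le> lam" if "u \<noteq> 0" for u
  proof -
    have "R u = R ((1 / norm u) *\<^sub>R u)" using that by (simp add: Rhom)
    also have "\<dots> \<le> R u0" using that by (intro u0(2)) auto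
    finally show ?thesis by (simp add: lam_def)
  qed
  have NleD: "N u \<le> lam * D u" for u
  proof (cases "u = 0")
    case True then show ?thesis by (simp add: N_def D_def)
  next
    case False
    then show ?thesis using Rle[OF False] Dpos[OF False] by (simp add: R_def divide_le_eq)
  qed
  have Nu0: "N u0 = lam * D u0" using Dpos[OF u0nz] by (simp add: lam_def R_def)
  have symF: "x \<bullet> (F *v y) = (F *v x) \<bullet> y" for x y using sym_dot[OF Fs] .
  have symM: "x \<bullet> (M *v y) = (M *v x) \<bullet> y" for x y using sym_dot[OF Ms] .
  have kern: "lam * (y \<bullet> (M *v u0)) - (M *v u0) \<bullet> (F *v (M *v y)) = 0" for y
  proof (rule quad_zero)
    show "0 \<le> lam * D y - N y" using NleD[of y] by simp
    fix t :: real
    have h1: "(M *v y) \<bullet> (F *v (M *v u0)) = (M *v u0) \<bullet> (F *v (M *v y))"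
      by (metis symF inner_commute)
    have "N (u0 + t *\<^sub>R y) = (M *v u0 + t *\<^sub>R (M *v y)) \<bullet> (F *v (M *v u0) + t *\<^sub>R (F *v (M *v y)))"
      by (simp add: N_def matrix_vector_right_distrib matrix_vector_mult_scaleR)
    also have "\<dots> = N u0 + 2 * t * ((M *v u0) \<bullet> (F *v (M *v y))) + t\<^sup>2 * N y"
      unfolding quad_exp h1 N_def by simp
    finally have e1: "N (u0 + t *\<^sub>R y) = N u0 + 2 * t * ((M *v u0) \<bullet> (F *v (M *v y))) + t\<^sup>2 * N y" .
    have h2: "y \<bullet> (M *v u0) = u0 \<bullet> (M *v y)"
      by (metis symM inner_commute)
    have "D (u0 + t *\<^sub>R y) = (u0 + t *\<^sub>R y) \<bullet> (M *v u0 + t *\<^sub>R (M *v y))"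
      by (simp add: D_def matrix_vector_right_distrib matrix_vector_mult_scaleR)
    also have "\<dots> = D u0 + 2 * t * (y \<bullet> (M *v u0)) + t\<^sup>2 * D y"
      unfolding quad_exp h2 D_def by simp
    finally have e2: "D (u0 + t *\<^sub>R y) = D u0 + 2 * t * (y \<bullet> (M *v u0)) + t\<^sup>2 * D y" .
    have "N (u0 + t *\<^sub>R y) \<le> lam * D (u0 + t *\<^sub>R y)" by (rule NleD)
    then show "0 \<le> 2 * t * (lam * (y \<bullet> (M *v u0)) - (M *v u0) \<bullet> (F *v (M *v y))) + t\<^sup>2 * (lam * D y - N y)"
      unfolding e1 e2 using Nu0 by (simp add: algebra_simps)
  qed
  define z where "z = lam *\<^sub>R (M *v u0) - M *v (F *v (M *v u0))"
  have "y \<bullet> z = 0" for y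
  proof -
    have "(M *v u0) \<bullet> (F *v (M *v y)) = (M *v (F *v (M *v u0))) \<bullet> y"
      using symF[of "M *v u0" "M *v y"] symM[of "F *v (M *v u0)" y] by (simp add: inner_commute)
    then show ?thesis using kern[of y] by (simp add: z_def inner_diff_right inner_commute)
  qed
  then have "z = 0" by (metis inner_eq_zero_iff)
  moreover have "M *v (lam *\<^sub>R u0 - F *v (M *v u0)) = z"
    by (simp add: z_def matrix_vector_mult_scaleR vec.diff)
  ultimately have "M *v (lam *\<^sub>R u0 - F *v (M *v u0)) = 0" by simp
  then have "lam *\<^sub>R u0 - F *v (M *v u0) = 0" using pd_inj[of M, OF pd] by blast
  then have eig: "F *v (M *v u0) = lam *\<^sub>R u0" by simp
  have lam_nn: "lam \<ge> 0"
    using Fpsd[of "M *v u0"] Dpos[OF u0nz] by (simp add: lam_def R_def N_def)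
  have "largest_eigenvalue (F ** M) = lam"
    unfolding largest_eigenvalue_def
  proof (rule Max_eqI)
    show "finite {l. \<exists>v. v \<noteq> 0 \<and> (F ** M) *v v = l *\<^sub>R v}" by (rule eig_finite[OF Fs Ms pd])
    show "lam \<in> {l. \<exists>v. v \<noteq> 0 \<and> (F ** M) *v v = l *\<^sub>R v}"
      using eig u0nz by (auto simp: matrix_vector_mul_assoc[symmetric])
    fix mu assume "mu \<in> {l. \<exists>v. v \<noteq> 0 \<and> (F ** M) *v v = l *\<^sub>R v}"
    then obtain v where v: "v \<noteq> 0" "F *v (M *v v) = mu *\<^sub>R v" by (auto simp: matrix_vector_mul_assoc)
    then have "N v = mu * D v" by (simp add: N_def D_def inner_commute)
    then have "mu * D v \<le> lam * D v" using NleD[of v] by simp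
    then show "mu \<le> lam" using Dpos[OF v(1)] by simp
  qed
  then show ?thesis
    apply (intro exI[of _ u0] exI[of _ lam])
    using u0nz eig lam_nn NleD by (auto simp: N_def D_def)
qed


theorem theorem2:
  fixes hbar :: real and M :: "real^'n^'n" and \<Omega> :: "real^'n \<Rightarrow> real"
  assumes hbar_pos: "hbar > 0"
    and M_sym: "transpose M = M"
    and M_pd: "\<And>v. v \<noteq> 0 \<Longrightarrow> v \<bullet> (M *v v) > 0"
    and Omega_pos: "\<And>q. \<Omega> q > 0"
    and Omega_C2: "C2_fun \<Omega>"
    and Omega_L2: "integrable lborel (\<lambda>q. (\<Omega> q)\<^sup>2)"
    and Omega_norm: "integral\<^sup>L lborel (\<lambda>q. (\<Omega> q)\<^sup>2) = 1"
    and Omega_decay: "(\<Omega> \<longlongrightarrow> 0) at_infinity"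
    and fisher_finite: "\<And>i j. integrable lborel (\<lambda>q. grad \<Omega> q $ i * grad \<Omega> q $ j)"
    and hess_finite: "\<And>i j. integrable lborel (\<lambda>q. \<Omega> q * hess \<Omega> q $ i $ j)"
  shows "(\<exists>Tstar. admissible \<Omega> Tstar
            \<and> (\<forall>T. admissible \<Omega> T \<longrightarrow> LQ hbar M \<Omega> T \<le> LQ hbar M \<Omega> Tstar)
            \<and> LQ hbar M \<Omega> Tstar = hbar\<^sup>2 / 8 * largest_eigenvalue (Qmat M \<Omega>))
         \<and> mean_quantum_potential hbar M \<Omega> \<ge> hbar\<^sup>2 / 8 * largest_eigenvalue (Qmat M \<Omega>)"
proof -
  interpret omega \<Omega>
    using Omega_pos Omega_C2 Omega_L2 Omega_norm fisher_finite hess_finite by unfold_locales auto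
  obtain u0 lam where u0: "u0 \<noteq> 0" and eig: "Fm *v (M *v u0) = lam *\<^sub>R u0"
    and lamE: "lam = largest_eigenvalue (Fm ** M)" and lam0: "lam \<ge> 0"
    and bnd: "\<And>u. (M *v u) \<bullet> (Fm *v (M *v u)) \<le> lam * (u \<bullet> (M *v u))"
    using eig_max[OF Fm_sym Fm_psd M_sym M_pd] by blast
  have L: "largest_eigenvalue (Qmat M \<Omega>) = lam" by (simp add: Q_eq lamE)
  define D where "D = u0 \<bullet> (M *v u0)"
  have Dp: "D > 0" using M_pd[OF u0] by (simp add: D_def)
  have symM: "x \<bullet> (M *v y) = (M *v x) \<bullet> y" for x y using sym_dot[OF M_sym] .
  define Ts where "Ts = Tw (M *v u0)"
  have Ts_val: "LQ hbar M \<Omega> Ts = hbar\<^sup>2 / 8 * lam"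
  proof -
    have v: "wmean_vec \<Omega> (grad Ts) = (-(lam/2)) *\<^sub>R u0"
      by (simp add: Ts_def mean_grad_Tw_F eig)
    have c: "wcov \<Omega> Ts Ts = lam / 4 * D"
      unfolding Ts_def wcov_Tw eig using symM[of u0 u0] by (simp add: D_def inner_commute)
    have n: "wmean_vec \<Omega> (grad Ts) \<bullet> (M *v wmean_vec \<Omega> (grad Ts)) = lam\<^sup>2 / 4 * D"
      unfolding v matrix_vector_mult_scaleR by (simp add: D_def power2_eq_square)
    show ?thesis
    proof (cases "lam = 0")
      case True then show ?thesis by (simp add: LQ_def n c)
    next
      case False then show ?thesis using Dp by (simp add: LQ_def n c power2_eq_square field_simps)
    qed
  qed
  have allT: "LQ hbar M \<Omega> T \<le> LQ hbar M \<Omega> Ts" if T: "admissible \<Omega> T" for T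
  proof -
    define v where "v = wmean_vec \<Omega> (grad T)"
    define V where "V = wcov \<Omega> T T"
    define P where "P = v \<bullet> (M *v v)"
    have V0: "V \<ge> 0" using T_bound(2)[OF T] by (simp add: V_def)
    have P0: "P \<ge> 0" using M_pd[of v] by (cases "v = 0") (auto simp: P_def)
    have "P\<^sup>2 \<le> V * ((M *v v) \<bullet> (Fm *v (M *v v)))"
    proof -
      have "(M *v v) \<bullet> v = P" by (simp add: P_def inner_commute)
      then show ?thesis using T_bound(1)[OF T, of "M *v v"] by (simp add: v_def V_def)
    qed
    also have "\<dots> \<le> V * (lam * P)" using bnd[of v] V0 by (intro mult_left_mono) (auto simp: P_def)
    finally have PP: "P * P \<le> (V * lam) * P" by (simp add: power2_eq_square mult.assoc)
    have "P / V \<le> lam"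
    proof (cases "P = 0 \<or> V = 0")
      case True then show ?thesis using lam0 by auto
    next
      case False
      then have "P > 0" "V > 0" using P0 V0 by auto
      then have "P \<le> V * lam" using PP by simp
      then show ?thesis using \<open>V > 0\<close> by (simp add: divide_le_eq mult.commute)
    qed
    then have le: "hbar\<^sup>2 / 8 * (P / V) \<le> hbar\<^sup>2 / 8 * lam"
      by (rule mult_left_mono) simp
    have "LQ hbar M \<Omega> T = hbar\<^sup>2 / 8 * (P / V)" by (simp add: LQ_def v_def V_def P_def)
    then have "LQ hbar M \<Omega> T \<le> hbar\<^sup>2 / 8 * lam" using le by simp
    then show ?thesis using Ts_val by simp
  qed
  have qp: "mean_quantum_potential hbar M \<Omega> \<ge> hbar\<^sup>2 / 8 * lam"
  proof -
    have "(M *v u0) \<bullet> (Fm *v (M *v u0)) = lam * (u0 \<bullet> (M *v u0))"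
      unfolding eig using symM[of u0 u0] by (simp add: inner_commute)
    from qp_ge[OF M_sym M_pd u0 this]
    have "lam \<le> 4 * (\<Sum>i\<in>UNIV. \<Sum>j\<in>UNIV. M $ i $ j * integral\<^sup>L lborel (\<lambda>q. pderiv_i i \<Omega> q * pderiv_i j \<Omega> q))" .
    then have "hbar\<^sup>2 / 8 * lam \<le> hbar\<^sup>2 / 8 * (4 * (\<Sum>i\<in>UNIV. \<Sum>j\<in>UNIV. M $ i $ j * integral\<^sup>L lborel (\<lambda>q. pderiv_i i \<Omega> q * pderiv_i j \<Omega> q)))"
      by (intro mult_left_mono) auto
    then show ?thesis by (simp add: qp_eq)
  qed
  show ?thesis
    unfolding L using Tw_adm[of "M *v u0"] allT Ts_val qp unfolding Ts_def by blast
qed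

end
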